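(* Let $G$ be an arbitrary graph and let the buyers' values be i.i.d. uniform on $[0,1]$. Then $$\inf_{\mathbf{T}\in\mathcal{N}_{(1/2)\cdot\mathbf{1}}}\mathcal{R}\big(\tfrac12\cdot\mathbf{1},\mathbf{T}\big)\ \ge\ \frac{e}{4}\cdot\sup_{p>0}\ \inf_{\mathbf{T}\in\mathcal{N}_{p\cdot\mathbf{1}}}\mathcal{R}(p\cdot\mathbf{1},\mathbf{T}).$$
   Context: Public-goods pricing game: $n$ buyers are the vertices of an undirected graph $G=([n],E)$; $N(i)=\{j:(i,j)\in E\}$ (so $i\notin N(i)$). Values i.i.d. uniform on $[0,1]$, $F(x)=\min\{1,x\}$ for $x\ge0$, $F(\infty)=1$. An equilibrium for price vector $\mathbf{p}$ is $\mathbf{T}\in[0,\infty]^n$ (buyer $i$ purchases iff $v_i\ge T_i$) with $T_i=p_i/\prod_{j\in N(i)}F(T_j)$ for all $i$ (convention $c/0=\infty$); $\mathcal{N}_{\mathbf{p}}$ is the set of equilibria; $\mathcal{R}(\mathbf{p},\mathbf{T})=\sum_ip_i(1-F(T_i))$; $p\cdot\mathbf{1}$ is the uniform price vector. *)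

theory Defs
  imports "HOL-Analysis.Analysis"
begin

text \<open>Graph on vertex set [n] = {0..<n} given by an edge relation E
  (assumed symmetric and irreflexive in the theorem).\<close>

definition nbrs :: "nat \<Rightarrow> (nat \<Rightarrow> nat \<Rightarrow> bool) \<Rightarrow> nat \<Rightarrow> nat set" where
  "nbrs n E i = {j. j < n \<and> E i j}"

text \<open>Uniform CDF on [0,infinity]: F(x) = min 1 x, F(infinity) = 1.\<close>
definition Funif :: "ereal \<Rightarrow> real" where
  "Funif x = (if x = \<infinity> then 1 else min 1 (real_of_ereal x))"

text \<open>Equilibria for price vector p: thresholds T in [0,infinity]^n with
  T_i = p_i / prod_{j in N(i)} F(T_j), convention c/0 = infinity.
  Coordinates outside [n] are fixed to 0 (irrelevant).\<close>
definition equilibria :: "nat \<Rightarrow> (nat \<Rightarrow> nat \<Rightarrow> bool) \<Rightarrow> (nat \<Rightarrow> real) \<Rightarrow> (nat \<Rightarrow> ereal) set" where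
  "equilibria n E p = {T. (\<forall>i. i \<ge> n \<longrightarrow> T i = 0) \<and>
     (\<forall>i<n. 0 \<le> T i \<and>
        T i = (let d = (\<Prod>j\<in>nbrs n E i. Funif (T j)) in
               if d = 0 then \<infinity> else ereal (p i / d)))}"

definition revenue :: "nat \<Rightarrow> (nat \<Rightarrow> real) \<Rightarrow> (nat \<Rightarrow> ereal) \<Rightarrow> real" where
  "revenue n p T = (\<Sum>i<n. p i * (1 - Funif (T i)))"

text \<open>Worst-case revenue over equilibria (as extended real, Inf {} = infinity).\<close>
definition worst_rev :: "nat \<Rightarrow> (nat \<Rightarrow> nat \<Rightarrow> bool) \<Rightarrow> (nat \<Rightarrow> real) \<Rightarrow> ereal" where
  "worst_rev n E p = (INF T\<in>equilibria n E p. ereal (revenue n p T))"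

end

theory Submission imports Defs begin

lemma ln_chord: fixes x::real assumes "1/2 \<le> x" "x \<le> 1"
  shows "- ln x \<le> 2 * ln 2 * (1 - x)"
proof -
  have c: "concave_on {1/2..1::real} ln"
    using ln_concave unfolding concave_on_def by (rule convex_on_subset) auto
  have "ln x \<ge> (ln (1::real) - ln (1/2)) / (1 - 1/2) * (x - 1/2) + ln (1/2)"
    using concave_onD_Icc'[OF c, of x] assms by simp
  then show ?thesis by (simp add: ln_div algebra_simps)
qed

lemma scalar_bound: fixes p x :: real
  assumes p: "0 < p" "p < 1" and x: "1/2 \<le> x" "x \<le> 1"
  shows "p * (1 - x powr (ln (1/p) / ln 2)) \<le> (4 / exp 1) * ((1/2) * (1 - x))"
proof -
  define a where "a = ln (1/p) / ln 2"
  have a0: "a \<ge> 0" using p by (simp add: a_def)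
  have xp: "x > 0" using x by simp
  have "x powr a = exp (a * ln x)" using xp by (simp add: powr_def)
  also have "\<dots> \<ge> 1 + a * ln x" by (rule exp_ge_add_one_self)
  finally have h1: "1 - x powr a \<le> a * (- ln x)" by simp
  have "a * (- ln x) \<le> a * (2 * ln 2 * (1 - x))"
    using ln_chord[OF x] a0 by (rule mult_left_mono)
  also have "\<dots> = 2 * ln (1/p) * (1 - x)" by (simp add: a_def)
  finally have h2: "1 - x powr a \<le> 2 * ln (1/p) * (1 - x)" using h1 by linarith
  have h3: "p * ln (1/p) \<le> exp (-1)"
  proof -
    have "ln ((1/p) / exp 1) \<le> (1/p) / exp 1 - 1" by (rule ln_le_minus_one) (use p in simp)
    moreover have "ln ((1/p) / exp 1) = ln (1/p) - 1" using p by (subst ln_div) auto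
    ultimately have "ln (1/p) - 1 \<le> (1/p) / exp 1 - 1" by simp
    hence "ln (1/p) \<le> (1/p) / exp 1" by simp
    hence "p * ln (1/p) \<le> p * ((1/p) / exp 1)" using p by (intro mult_left_mono) auto
    also have "\<dots> = exp (-1)" using p by (simp add: exp_minus divide_inverse)
    finally show ?thesis .
  qed
  have "p * (1 - x powr a) \<le> p * (2 * ln (1/p) * (1 - x))"
    using h2 p by (simp add: mult_left_mono)
  also have "\<dots> = 2 * (1 - x) * (p * ln (1/p))" by simp
  also have "\<dots> \<le> 2 * (1 - x) * exp (-1)" using h3 x by (simp add: mult_left_mono)
  also have "\<dots> = (4 / exp 1) * ((1/2) * (1 - x))" by (simp add: exp_minus field_simps)
  finally show ?thesis by (simp add: a_def)
qed

lemma Funif_bounds: assumes "0 \<le> t" shows "0 \<le> Funif t" "Funif t \<le> 1"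
  using assms by (auto simp: Funif_def real_of_ereal_pos)

lemma Funif_ereal: assumes "0 \<le> r" shows "Funif (ereal r) = min 1 r"
  by (simp add: Funif_def)

lemma nbrs_sub: "nbrs n E i \<subseteq> {..<n}" "finite (nbrs n E i)"
  by (auto simp: nbrs_def)

lemma half_facts:
  assumes T: "T \<in> equilibria n E (\<lambda>_. 1/2)" and i: "i < n"
  shows "1/2 \<le> Funif (T i) \<and> Funif (T i) \<le> 1"
proof -
  have T0: "\<And>j. j < n \<Longrightarrow> 0 \<le> T j" and Ti: "\<And>i. i < n \<Longrightarrow> T i = (let d = (\<Prod>j\<in>nbrs n E i. Funif (T j)) in
               if d = 0 then \<infinity> else ereal ((1/2) / d))"
    using T unfolding equilibria_def mem_Collect_eq by blast+
  define d where "d = (\<Prod>j\<in>nbrs n E i. Funif (T j))"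
  have Fb: "\<And>j. j \<in> nbrs n E i \<Longrightarrow> 0 \<le> Funif (T j) \<and> Funif (T j) \<le> 1"
  proof -
    fix j assume "j \<in> nbrs n E i"
    then have "j < n" by (simp add: nbrs_def)
    then have "0 \<le> T j" by (rule T0)
    then show "0 \<le> Funif (T j) \<and> Funif (T j) \<le> 1" using Funif_bounds by blast
  qed
  have d0: "0 \<le> d" unfolding d_def
    by (rule prod_nonneg) (use Fb in blast)
  have d1: "d \<le> 1" unfolding d_def
    by (rule prod_le_1) (use Fb in blast)
  show ?thesis
  proof (cases "d = 0")
    case True
    then have "T i = \<infinity>" using Ti[OF i] unfolding d_def[symmetric] Let_def by simp
    then show ?thesis by (simp add: Funif_def)
  next
    case False
    then have "T i = ereal ((1/2)/d)" using Ti[OF i] unfolding d_def[symmetric] Let_def by simp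
    moreover have "(1/2) / d \<ge> 1/2" using False d0 d1 by (simp add: field_simps)
    ultimately show ?thesis using d0 by (simp add: Funif_ereal)
  qed
qed

lemma half_form:
  assumes T: "T \<in> equilibria n E (\<lambda>_. 1/2)" and i: "i < n"
  shows "(\<Prod>j\<in>nbrs n E i. Funif (T j)) > 0 \<and>
         Funif (T i) = min 1 ((1/2) / (\<Prod>j\<in>nbrs n E i. Funif (T j)))"
proof -
  define d where "d = (\<Prod>j\<in>nbrs n E i. Funif (T j))"
  have dpos: "d > 0" unfolding d_def
  proof (rule prod_pos)
    fix j assume "j \<in> nbrs n E i"
    then have "j < n" by (simp add: nbrs_def)
    then show "0 < Funif (T j)" using half_facts[OF T, of j] by linarith
  qed
  have Ti: "T i = (let d = (\<Prod>j\<in>nbrs n E i. Funif (T j)) in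
               if d = 0 then \<infinity> else ereal ((1/2) / d))"
    using T i unfolding equilibria_def by blast
  have "T i = ereal ((1/2)/d)" using dpos unfolding Ti d_def[symmetric] Let_def by simp
  then have "Funif (T i) = min 1 ((1/2)/d)" using dpos by (simp add: Funif_ereal)
  then show ?thesis using dpos unfolding d_def by blast
qed

lemma construct_small:
  assumes T: "T \<in> equilibria n E (\<lambda>_. 1/2)" and p: "0 < p" "p < 1"
  shows "worst_rev n E (\<lambda>_. p) \<le> ereal ((4 / exp 1) * revenue n (\<lambda>_. 1/2) T)"
proof -
  define a where "a = ln (1/p) / ln 2"
  define x where "x j = Funif (T j)" for j
  have apos: "a > 0" using p by (simp add: a_def)
  have hp: "(1/2) powr a = p" using p
    by (simp add: a_def powr_def ln_div)
  define T' where "T' i = (if i < n then ereal (p / (\<Prod>j\<in>nbrs n E i. x j powr a)) else 0)" for i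
  have xb: "\<And>j. j < n \<Longrightarrow> 1/2 \<le> x j \<and> x j \<le> 1" using half_facts[OF T] by (simp add: x_def)
  have Dpos: "\<And>i. (\<Prod>j\<in>nbrs n E i. x j powr a) > 0"
  proof (rule prod_pos)
    fix i j assume "j \<in> nbrs n E i"
    then have "j < n" by (simp add: nbrs_def)
    then have "x j > 0" using xb[of j] by linarith
    then show "x j powr a > 0" by simp
  qed
  have FT': "\<And>i. i < n \<Longrightarrow> Funif (T' i) = x i powr a"
  proof -
    fix i assume i: "i < n"
    define d where "d = (\<Prod>j\<in>nbrs n E i. x j)"
    have hf: "d > 0" "x i = min 1 ((1/2) / d)" using half_form[OF T i] unfolding d_def x_def by blast+
    have Deq: "(\<Prod>j\<in>nbrs n E i. x j powr a) = d powr a" by (simp add: d_def prod_powr_distrib)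
    have pd: "((1/2)/d) powr a = p / d powr a" using hp hf(1) by (simp add: powr_divide powr_mult) (metis times_divide_eq_left divide_divide_eq_left mult_1)
    have "x i powr a = min 1 (p / d powr a)"
    proof (cases "1 \<le> (1/2) / d")
      case True
      then have "1 \<le> ((1/2)/d) powr a" using apos by (simp add: ge_one_powr_ge_zero)
      then have "1 \<le> p / d powr a" unfolding pd .
      then show ?thesis using True hf by simp
    next
      case False
      then have "((1/2)/d) powr a \<le> 1" using apos hf(1) by (intro powr_le1) auto
      then have "p / d powr a \<le> 1" unfolding pd .
      moreover have "x i powr a = p / d powr a" using False hf(2) pd by simp
      ultimately show ?thesis by simp
    qed
    moreover have "Funif (T' i) = min 1 (p / d powr a)"
      using i Dpos[of i] p by (simp add: T'_def Deq Funif_ereal)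
    ultimately show "Funif (T' i) = x i powr a" by simp
  qed
  have T'eq: "T' \<in> equilibria n E (\<lambda>_. p)"
  proof -
    have PP: "\<And>i. i < n \<Longrightarrow> (\<Prod>j\<in>nbrs n E i. Funif (T' j)) = (\<Prod>j\<in>nbrs n E i. x j powr a)"
      by (rule prod.cong) (auto simp: nbrs_def FT')
    have Ti: "\<And>i. i < n \<Longrightarrow> T' i = (let d = (\<Prod>j\<in>nbrs n E i. Funif (T' j)) in if d = 0 then \<infinity> else ereal (p / d))"
    proof -
      fix i assume i: "i < n"
      show "T' i = (let d = (\<Prod>j\<in>nbrs n E i. Funif (T' j)) in if d = 0 then \<infinity> else ereal (p / d))"
        unfolding PP[OF i] Let_def using Dpos[of i] i by (simp add: T'_def)
    qed
    show ?thesis unfolding equilibria_def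
      apply (intro CollectI conjI allI impI)
      subgoal for i by (simp add: T'_def)
      subgoal for i using p Dpos[of i] by (simp add: T'_def)
      subgoal for i by (rule Ti)
      done
  qed
  have "revenue n (\<lambda>_. p) T' = (\<Sum>i<n. p * (1 - x i powr a))"
    unfolding revenue_def by (rule sum.cong) (auto simp: FT')
  also have "\<dots> \<le> (\<Sum>i<n. (4 / exp 1) * ((1/2) * (1 - x i)))"
  proof (rule sum_mono)
    fix i assume "i \<in> {..<n}"
    then have "1/2 \<le> x i" "x i \<le> 1" using xb by auto
    then show "p * (1 - x i powr a) \<le> (4 / exp 1) * ((1/2) * (1 - x i))"
      unfolding a_def by (rule scalar_bound[OF p])
  qed
  also have "\<dots> = (4 / exp 1) * revenue n (\<lambda>_. 1/2) T"
    unfolding revenue_def sum_distrib_left x_def ..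
  finally have h1: "revenue n (\<lambda>_. p) T' \<le> (4 / exp 1) * revenue n (\<lambda>_. 1/2) T" .
  have h2: "worst_rev n E (\<lambda>_. p) \<le> ereal (revenue n (\<lambda>_. p) T')"
    unfolding worst_rev_def using T'eq by (rule INF_lower)
  show ?thesis using h2 by (rule order_trans) (rule iffD2[OF ereal_less_eq(3)], rule h1)
qed

lemma rev_nonneg: assumes T: "T \<in> equilibria n E (\<lambda>_. 1/2)"
  shows "revenue n (\<lambda>_. 1/2) T \<ge> 0"
  unfolding revenue_def by (rule sum_nonneg) (use half_facts[OF T] in auto)

lemma construct_big:
  assumes T: "T \<in> equilibria n E (\<lambda>_. 1/2)" and p: "1 \<le> p"
  shows "worst_rev n E (\<lambda>_. p) \<le> ereal ((4 / exp 1) * revenue n (\<lambda>_. 1/2) T)"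
proof -
  define T' where "T' i = (if i < n then ereal p else 0)" for i
  have F: "\<And>i. i < n \<Longrightarrow> Funif (T' i) = 1" using p by (simp add: T'_def Funif_ereal)
  have P: "\<And>i. (\<Prod>j\<in>nbrs n E i. Funif (T' j)) = 1"
    by (rule prod.neutral) (auto simp: nbrs_def F)
  have Ti: "\<And>i. i < n \<Longrightarrow> T' i = (let d = (\<Prod>j\<in>nbrs n E i. Funif (T' j)) in if d = 0 then \<infinity> else ereal (p / d))"
    unfolding P Let_def by (simp add: T'_def)
  have T'eq: "T' \<in> equilibria n E (\<lambda>_. p)"
    unfolding equilibria_def
      apply (intro CollectI conjI allI impI)
      subgoal for i by (simp add: T'_def)
      subgoal for i using p by (simp add: T'_def)
      subgoal for i by (rule Ti)
      done
  have h0: "revenue n (\<lambda>_. p) T' = 0" unfolding revenue_def by (simp add: F)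
  have h2: "worst_rev n E (\<lambda>_. p) \<le> ereal (revenue n (\<lambda>_. p) T')"
    unfolding worst_rev_def using T'eq by (rule INF_lower)
  have h1: "0 \<le> (4 / exp 1) * revenue n (\<lambda>_. 1/2) T" by (intro mult_nonneg_nonneg) (simp_all add: rev_nonneg[OF T])
  show ?thesis using h2 unfolding h0 by (rule order_trans) (rule iffD2[OF ereal_less_eq(3)], rule h1)
qed

theorem theorem4p6:
  fixes n :: nat and E :: "nat \<Rightarrow> nat \<Rightarrow> bool"
  assumes "\<And>i j. E i j \<Longrightarrow> E j i"
    and "\<And>i. \<not> E i i"
  shows "worst_rev n E (\<lambda>_. 1/2) \<ge>
           ereal (exp 1 / 4) * (SUP p\<in>{p::real. p > 0}. worst_rev n E (\<lambda>_. p))"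
  unfolding worst_rev_def[of n E "\<lambda>_. 1/2"]
proof (rule INF_greatest)
  fix T assume T: "T \<in> equilibria n E (\<lambda>_. 1/2)"
  define r where "r = revenue n (\<lambda>_. 1/2) T"
  have S: "(SUP p\<in>{p::real. p > 0}. worst_rev n E (\<lambda>_. p)) \<le> ereal ((4 / exp 1) * r)"
  proof (rule SUP_least)
    fix p :: real assume "p \<in> {p. p > 0}"
    then show "worst_rev n E (\<lambda>_. p) \<le> ereal ((4 / exp 1) * r)"
      using construct_small[OF T] construct_big[OF T] unfolding r_def
      by (cases "p < 1") auto
  qed
  have "ereal (exp 1 / 4) * (SUP p\<in>{p::real. p > 0}. worst_rev n E (\<lambda>_. p))
        \<le> ereal (exp 1 / 4) * ereal ((4 / exp 1) * r)"
    by (rule ereal_mult_left_mono[OF S]) simp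
  also have "\<dots> = ereal r" by simp
  finally show "ereal (exp 1 / 4) * (SUP p\<in>{p::real. p > 0}. worst_rev n E (\<lambda>_. p)) \<le> ereal (revenue n (\<lambda>_. 1/2) T)"
    by (simp add: r_def)
qed

end
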